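(* Let $R$ be a commutative ring which is free as an abelian group, $n\ge2$, $p$ a prime, and write $\Gamma_m=\Gamma(SL_n(R),p^m)$. Let $r,s,l\ge1$ with $l\le s$. Then the group extension $$1\to\Gamma_{r+s-l}/\Gamma_{r+s}\to\Gamma_r/\Gamma_{r+s}\to\Gamma_r/\Gamma_{r+s-l}\to1$$ is central if and only if $r\ge l$.
   Context: $\Gamma(SL_n(R),p^m)=\ker\big(SL_n(R)\to SL_n(R\otimes_{\mathbb{Z}}\mathbb{Z}/p^m)\big)$. An extension $1\to N\to G\to Q\to1$ is central if $N$ lies in the center of $G$. *)

theory Defs
  imports "HOL-Analysis.Analysis"
begin

definition free_abelian_ring :: "'a::comm_ring_1 itself \<Rightarrow> bool" where
  "free_abelian_ring _ \<longleftrightarrow> (\<exists>B::'a set. \<forall>x::'a. \<exists>!c::'a \<Rightarrow> int.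
       {b. c b \<noteq> 0} \<subseteq> B \<and> finite {b. c b \<noteq> 0} \<and>
       x = (\<Sum>b\<in>{b. c b \<noteq> 0}. of_int (c b) * b))"

text \<open>Principal congruence subgroup Gamma(SL_n(R), q): kernel of SL_n(R) -> SL_n(R/qR)
  (note R \<otimes> Z/q = R/qR): determinant one and congruent to the identity mod q entrywise.\<close>
definition cong_subgroup :: "nat \<Rightarrow> ('a::comm_ring_1^'n::finite^'n) set" where
  "cong_subgroup q = {A. det A = 1 \<and>
      (\<forall>i j. \<exists>c. A $ i $ j - mat 1 $ i $ j = of_nat q * c)}"

definition lcoset :: "('a::semiring_1^'n::finite^'n) \<Rightarrow> ('a^'n^'n) set \<Rightarrow> ('a^'n^'n) set" where
  "lcoset x K = (\<lambda>k. x ** k) ` K"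

text \<open>For normal subgroups K \<subseteq> N \<subseteq> G, the extension 1 -> N/K -> G/K -> G/N -> 1 is central
  iff every element of N/K commutes in G/K with every element of G/K,
  i.e. (xK)(yK) = (xy)K equals (yx)K.\<close>
definition central_ext :: "('a::semiring_1^'n::finite^'n) set \<Rightarrow> ('a^'n^'n) set \<Rightarrow> ('a^'n^'n) set \<Rightarrow> bool" where
  "central_ext G N K \<longleftrightarrow> (\<forall>x\<in>N. \<forall>y\<in>G. lcoset (x ** y) K = lcoset (y ** x) K)"

end

theory Submission imports Defs begin

definition adjm :: "'a::comm_ring_1^'n::finite^'n \<Rightarrow> 'a^'n^'n" where
  "adjm A = (\<chi> k j. det (\<chi> i. if i = j then axis k 1 else A $ i))"

lemma row_expand: "(\<Sum>k\<in>UNIV. (v::'a::comm_ring_1^'n::finite) $ k *s axis k 1) = v"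
proof -
  have "(\<Sum>k\<in>UNIV. v $ k * (if i = k then 1 else 0)) = v $ i" for i
  proof -
    have "v $ k * (if i = k then 1 else 0) = (if k = i then v $ i else 0)" for k by auto
    then show ?thesis by simp
  qed
  then show ?thesis by (simp add: vec_eq_iff sum_component axis_def)
qed

lemma mul_adjm: "A ** adjm A = mat (det (A::'a::comm_ring_1^'n::finite^'n))"
proof -
  have "(A ** adjm A) $ i $ j = (if i = j then det A else 0)" for i j
  proof -
    have "(A ** adjm A) $ i $ j = (\<Sum>k\<in>UNIV. A$i$k * det (\<chi> i'. if i' = j then axis k 1 else A $ i'))"
      by (simp add: matrix_matrix_mult_def adjm_def)
    also have "\<dots> = (\<Sum>k\<in>UNIV. det (\<chi> i'. if i' = j then A$i$k *s axis k 1 else A $ i'))"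
      by (simp add: det_row_mul)
    also have "\<dots> = det (\<chi> i'. if i' = j then (\<Sum>k\<in>UNIV. A$i$k *s axis k 1) else A $ i')"
      by (simp add: det_linear_row_sum)
    also have "\<dots> = det (\<chi> i'. if i' = j then A $ i else A $ i')"
      by (simp only: row_expand)
    also have "\<dots> = (if i = j then det A else 0)"
    proof (cases "i = j")
      case True
      have "(\<chi> i'. if i' = j then A $ i else A $ i') = A" using True by (intro iffD2[OF vec_eq_iff]) auto
      then show ?thesis using True by simp
    next
      case False
      have "det (\<chi> i'. if i' = j then A $ i else A $ i') = 0"
        by (rule det_identical_rows[OF False]) (simp add: row_def vec_eq_iff False)
      then show ?thesis using False by simp
    qed
    finally show ?thesis .
  qed
  then show ?thesis by (simp add: vec_eq_iff mat_def)
qed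

definition dvq :: "nat \<Rightarrow> 'a::comm_ring_1^'n::finite^'n \<Rightarrow> bool" where
  "dvq q M \<longleftrightarrow> (\<forall>i j. \<exists>c. M $ i $ j = of_nat q * c)"

lemma cong_iff: "A \<in> cong_subgroup q \<longleftrightarrow> det A = 1 \<and> dvq q (A - mat 1)"
  by (simp add: cong_subgroup_def dvq_def)

lemma mdiff_l: "(A::'a::comm_ring_1^'n::finite^'n) ** (B - C) = A ** B - A ** C"
  by (simp add: vec_eq_iff matrix_matrix_mult_def algebra_simps sum_subtractf)

lemma mdiff_r: "((A::'a::comm_ring_1^'n::finite^'n) - B) ** C = A ** C - B ** C"
  by (simp add: vec_eq_iff matrix_matrix_mult_def algebra_simps sum_subtractf)

lemma madd_r: "((A::'a::comm_ring_1^'n::finite^'n) + B) ** C = A ** C + B ** C"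
  by (simp add: vec_eq_iff matrix_matrix_mult_def algebra_simps sum.distrib)

lemma dvq_add: "dvq q A \<Longrightarrow> dvq q B \<Longrightarrow> dvq q (A + B)"
  unfolding dvq_def by (metis distrib_left vector_add_component)

lemma dvq_diff: "dvq q A \<Longrightarrow> dvq q B \<Longrightarrow> dvq q (A - B)"
  unfolding dvq_def by (metis right_diff_distrib vector_minus_component)

lemma dvq_neg: "dvq q A \<Longrightarrow> dvq q (- A)"
  unfolding dvq_def by (metis mult_minus_right vector_uminus_component)

lemma dvq_dvd: "q' dvd q \<Longrightarrow> dvq q A \<Longrightarrow> dvq q' A"
  unfolding dvq_def by (metis dvd_def mult.assoc of_nat_mult)

lemma dvq_mult2:
  assumes "dvq q (U::'a::comm_ring_1^'n::finite^'n)" "dvq q' V"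
  shows "dvq (q * q') (U ** V)"
  unfolding dvq_def
proof (intro allI)
  fix i j
  from assms(1) have "\<forall>k. \<exists>c. U $ i $ k = of_nat q * c" by (simp add: dvq_def)
  then obtain c where c: "\<And>k. U $ i $ k = of_nat q * c k" by metis
  from assms(2) have "\<forall>k. \<exists>c. V $ k $ j = of_nat q' * c" by (simp add: dvq_def)
  then obtain d where d: "\<And>k. V $ k $ j = of_nat q' * d k" by metis
  have "(U ** V) $ i $ j = of_nat (q * q') * (\<Sum>k\<in>UNIV. c k * d k)"
    by (simp add: matrix_matrix_mult_def c d sum_distrib_left algebra_simps)
  then show "\<exists>e. (U ** V) $ i $ j = of_nat (q * q') * e" by blast
qed

lemma dvq_one: "dvq 1 (A::'a::comm_ring_1^'n::finite^'n)"
  unfolding dvq_def by simp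

lemma dvq_mult_l: "dvq q V \<Longrightarrow> dvq q ((U::'a::comm_ring_1^'n::finite^'n) ** V)"
  using dvq_mult2[OF dvq_one[of U], of q V] by simp

lemma dvq_mult_r: "dvq q U \<Longrightarrow> dvq q ((U::'a::comm_ring_1^'n::finite^'n) ** V)"
  using dvq_mult2[OF _ dvq_one[of V], of q U] by simp

lemma inv_both:
  fixes A :: "'a::comm_ring_1^'n::finite^'n"
  assumes "det A = 1"
  shows "A ** adjm A = mat 1" "adjm A ** A = mat 1" "det (adjm A) = 1"
proof -
  show 1: "A ** adjm A = mat 1" using mul_adjm[of A] assms by simp
  have "det A * det (adjm A) = 1" using arg_cong[OF 1, of det] by (simp add: det_mul)
  then show d: "det (adjm A) = 1" using assms by simp
  have 2: "adjm A ** adjm (adjm A) = mat 1" using mul_adjm[of "adjm A"] d by simp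
  have "A = A ** (adjm A ** adjm (adjm A))" using 2 by simp
  also have "\<dots> = adjm (adjm A)" using 1 by (simp add: matrix_mul_assoc)
  finally show "adjm A ** A = mat 1" using 2 by simp
qed

lemma cong_mult:
  assumes "A \<in> cong_subgroup q" "B \<in> cong_subgroup q"
  shows "(A::'a::comm_ring_1^'n::finite^'n) ** B \<in> cong_subgroup q"
proof -
  have e: "A ** B - mat 1 = (A - mat 1) ** (B - mat 1) + (A - mat 1) + (B - mat 1)"
    by (simp add: mdiff_l mdiff_r algebra_simps)
  have "dvq q (A - mat 1)" "dvq q (B - mat 1)" "det A = 1" "det B = 1" using assms cong_iff by blast+
  then show ?thesis unfolding cong_iff e
    by (simp only: det_mul dvq_add dvq_mult_l mult_1)
qed

lemma cong_inv:
  assumes "A \<in> cong_subgroup q"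
  shows "adjm (A::'a::comm_ring_1^'n::finite^'n) \<in> cong_subgroup q"
proof -
  have d: "det A = 1" using assms cong_iff by blast
  have e: "adjm A - mat 1 = - (adjm A ** (A - mat 1))"
    using inv_both(2)[OF d] by (simp add: mdiff_l)
  show ?thesis using assms inv_both(3)[OF d] unfolding cong_iff
    by (simp add: e dvq_neg dvq_mult_l)
qed

lemma one_cong: "mat 1 \<in> cong_subgroup q"
  unfolding cong_iff dvq_def by (simp add: exI[of _ 0])

lemma lcoset_shift:
  assumes "k0 \<in> cong_subgroup q"
  shows "lcoset (M ** k0) (cong_subgroup q) = lcoset (M::'a::comm_ring_1^'n::finite^'n) (cong_subgroup q)"
proof -
  have d: "det k0 = 1" using assms cong_iff by blast
  show ?thesis unfolding lcoset_def
  proof (intro equalityI subsetI)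
    fix z assume "z \<in> (**) (M ** k0) ` cong_subgroup q"
    then obtain k where "k \<in> cong_subgroup q" "z = M ** k0 ** k" by auto
    then show "z \<in> (**) M ` cong_subgroup q"
      using cong_mult[OF assms] by (auto simp: matrix_mul_assoc[symmetric])
  next
    fix z assume "z \<in> (**) M ` cong_subgroup q"
    then obtain k where k: "k \<in> cong_subgroup q" "z = M ** k" by auto
    have "z = M ** k0 ** (adjm k0 ** k)"
      using k inv_both(1)[OF d] by (metis matrix_mul_assoc matrix_mul_lid)
    moreover have "adjm k0 ** k \<in> cong_subgroup q"
      using cong_mult[OF cong_inv[OF assms] k(1)] .
    ultimately show "z \<in> (**) (M ** k0) ` cong_subgroup q" by blast
  qed
qed

lemma commut:
  fixes x y :: "'a::comm_ring_1^'n::finite^'n"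
  shows "x ** y - y ** x = (x - mat 1) ** (y - mat 1) - (y - mat 1) ** (x - mat 1)"
  by (simp add: mdiff_l mdiff_r algebra_simps)


definition Rp :: "'a::comm_ring_1 set \<Rightarrow> 'a \<Rightarrow> ('a \<Rightarrow> int) \<Rightarrow> bool" where
  "Rp B x c \<longleftrightarrow> {b. c b \<noteq> 0} \<subseteq> B \<and> finite {b. c b \<noteq> 0} \<and>
       x = (\<Sum>b\<in>{b. c b \<noteq> 0}. of_int (c b) * b)"

lemma Rp_scale:
  assumes "Rp B x c" "N \<noteq> 0"
  shows "Rp B (of_int N * x) (\<lambda>b. N * c b)"
proof -
  have s: "{b. N * c b \<noteq> 0} = {b. c b \<noteq> 0}" using assms(2) by auto
  show ?thesis using assms(1) unfolding Rp_def s
    by (simp add: sum_distrib_left mult.assoc)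
qed

lemma free_basis:
  assumes "free_abelian_ring TYPE('a::comm_ring_1)"
  obtains B :: "'a::comm_ring_1 set" where "\<And>x. \<exists>!c. Rp B x c"
  using assms unfolding free_abelian_ring_def Rp_def by blast

lemma free_no_div:
  assumes "free_abelian_ring TYPE('a::comm_ring_1)" "\<bar>N\<bar> \<ge> 2"
    and "(1::'a) = of_int N * z"
  shows False
proof -
  obtain B :: "'a set" where H: "\<And>x. \<exists>!c. Rp B x c" using free_basis[OF assms(1)] by blast
  obtain c1 where c1: "Rp B 1 c1" using H by blast
  have "\<exists>b. c1 b \<noteq> 0"
  proof (rule ccontr)
    assume "\<not> ?thesis"
    then have "{b. c1 b \<noteq> 0} = {}" by auto
    then show False using c1 unfolding Rp_def by simp
  qed
  then obtain b0 where b0: "c1 b0 \<noteq> 0" by blast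
  have b0B: "b0 \<in> B" using c1 b0 unfolding Rp_def by blast
  define d where "d = (\<lambda>b. if b = b0 then (1::int) else 0)"
  have sd: "{b. d b \<noteq> 0} = {b0}" by (auto simp: d_def)
  have Rd: "Rp B b0 d" unfolding Rp_def sd using b0B by (simp add: d_def)
  obtain cz where cz: "Rp B (z * b0) cz" using H by blast
  have N0: "N \<noteq> 0" using assms(2) by auto
  have "b0 = of_int N * (z * b0)" using assms(3) by (metis mult.assoc mult_1)
  then have R2: "Rp B b0 (\<lambda>b. N * cz b)" using Rp_scale[OF cz N0] by simp
  have "d = (\<lambda>b. N * cz b)" using H[of b0] Rd R2 by blast
  then have "1 = N * cz b0" unfolding d_def by metis
  then have "\<bar>N\<bar> = 1" using zmult_eq_1_iff by (metis abs_of_nat abs_neg_one abs_one)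
  then show False using assms(2) by simp
qed

lemma free_torsion:
  assumes "free_abelian_ring TYPE('a::comm_ring_1)" "N \<noteq> 0"
    and "of_int N * (x::'a) = 0"
  shows "x = 0"
proof -
  obtain B :: "'a set" where H: "\<And>x. \<exists>!c. Rp B x c" using free_basis[OF assms(1)] by blast
  obtain cx where cx: "Rp B x cx" using H by blast
  have R0: "Rp B 0 (\<lambda>_. 0)" unfolding Rp_def by simp
  have R1: "Rp B 0 (\<lambda>b. N * cx b)" using Rp_scale[OF cx assms(2)] assms(3) by simp
  have "(\<lambda>b. N * cx b) = (\<lambda>_. 0)" using H[of 0] R0 R1 by blast
  then have "\<forall>b. cx b = 0" using assms(2) by (metis mult_eq_0_iff)
  then show ?thesis using cx unfolding Rp_def by simp
qed

lemma free_pow: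
  assumes "free_abelian_ring TYPE('a::comm_ring_1)" "prime (p::nat)" "t \<ge> 1"
    and "(of_nat (p ^ m) :: 'a) = of_nat (p ^ (m + t)) * c"
  shows False
proof -
  have "of_int (int (p ^ m)) * (1 - of_int (int (p ^ t)) * c) = (0::'a)"
    using assms(4) by (simp add: algebra_simps power_add)
  moreover have "int (p ^ m) \<noteq> 0" using assms(2) by (simp add: prime_gt_0_nat)
  ultimately have "1 - of_int (int (p ^ t)) * c = (0::'a)" using free_torsion[OF assms(1)] by blast
  then have e: "(1::'a) = of_int (int (p ^ t)) * c" by simp
  have "p \<ge> 2" using assms(2) prime_ge_2_nat by blast
  then have "p ^ t \<ge> p ^ 1" using assms(3) by (intro power_increasing) auto
  then have "p ^ t \<ge> 2" using \<open>p \<ge> 2\<close> by simp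
  then have "\<bar>int (p ^ t)\<bar> \<ge> 2" by linarith
  then show False using free_no_div[OF assms(1) _ e] by blast
qed


definition elem :: "'n::finite \<Rightarrow> 'n \<Rightarrow> 'a::comm_ring_1 \<Rightarrow> 'a^'n^'n" where
  "elem i j c = (\<chi> k. if k = i then row i (mat 1) + c *s row j (mat 1) else row k (mat 1))"

lemma elem_det: "i \<noteq> j \<Longrightarrow> det (elem i j c) = 1"
  unfolding elem_def using det_row_operation[of i j "mat 1" c] by simp

lemma elem_sub: "i \<noteq> j \<Longrightarrow> elem i j c $ a $ b - mat 1 $ a $ b = (if a = i \<and> b = j then c else 0)"
  by (auto simp: elem_def row_def mat_def)

lemma elem_cong:
  fixes i j :: "'n::finite"
  shows "i \<noteq> j \<Longrightarrow> elem i j (of_nat q :: 'a::comm_ring_1) \<in> cong_subgroup q"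
proof -
  assume ij: "i \<noteq> j"
  have "\<exists>d. elem i j (of_nat q :: 'a) $ a $ b - mat 1 $ a $ b = of_nat q * d" for a b
    using ij by (cases "a = i \<and> b = j") (auto simp: elem_sub intro: exI[of _ 0] exI[of _ 1])
  then show ?thesis unfolding cong_iff dvq_def using elem_det[OF ij] by (simp del: vec_lambda_beta)
qed

theorem lemma7p1:
  fixes p r s l :: nat
  assumes "free_abelian_ring TYPE('a::comm_ring_1)"
    and "CARD('n::finite) \<ge> 2"
    and "prime p"
    and "r \<ge> 1" and "s \<ge> 1" and "l \<ge> 1" and "l \<le> s"
  shows "central_ext (cong_subgroup (p ^ r) :: ('a^'n^'n) set)
            (cong_subgroup (p ^ (r + s - l)))
            (cong_subgroup (p ^ (r + s)))
         \<longleftrightarrow> r \<ge> l"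
proof
  define a where "a = r + s - l"
  let ?K = "cong_subgroup (p ^ (r + s)) :: ('a^'n^'n) set"
  show "r \<ge> l" if C: "central_ext (cong_subgroup (p ^ r) :: ('a^'n^'n) set)
            (cong_subgroup (p ^ (r + s - l))) ?K"
  proof (rule ccontr)
    assume "\<not> r \<ge> l"
    then have rl: "r < l" by simp
    have "\<not> (\<forall>i\<in>(UNIV::'n set). \<forall>j\<in>UNIV. i = j)"
      using assms(2) card_le_Suc0_iff_eq[of "UNIV::'n set"] by auto
    then obtain i0 j0 :: 'n where ij: "i0 \<noteq> j0" by blast
    define c1 where "c1 = (of_nat (p ^ a) :: 'a)"
    define c2 where "c2 = (of_nat (p ^ r) :: 'a)"
    define x where "x = elem i0 j0 c1"
    define y where "y = elem j0 i0 c2"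
    have xN: "x \<in> cong_subgroup (p ^ (r + s - l))"
      unfolding x_def c1_def a_def using elem_cong ij by blast
    have yG: "y \<in> cong_subgroup (p ^ r)"
      unfolding y_def c2_def using elem_cong ij by metis
    have "lcoset (x ** y) ?K = lcoset (y ** x) ?K"
      using C xN yG unfolding central_ext_def by blast
    moreover have "x ** y \<in> lcoset (x ** y) ?K"
      unfolding lcoset_def using one_cong by (metis image_eqI matrix_mul_rid)
    ultimately obtain k where k: "k \<in> ?K" "x ** y = y ** x ** k"
      unfolding lcoset_def by auto
    have "x ** y - y ** x = (y ** x) ** (k - mat 1)"
      using k(2) by (simp add: mdiff_l)
    moreover have "dvq (p ^ (r + s)) (k - mat 1)" using k(1) cong_iff by blast
    ultimately have "dvq (p ^ (r + s)) (x ** y - y ** x)" by (simp add: dvq_mult_l)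
    then obtain c where c: "(x ** y - y ** x) $ i0 $ i0 = of_nat (p ^ (r + s)) * c"
      unfolding dvq_def by blast
    have t1: "((x - mat 1) ** (y - mat 1)) $ i0 $ i0 = c1 * c2"
    proof -
      have "\<And>k. (x - mat 1) $ i0 $ k * (y - mat 1) $ k $ i0 = (if k = j0 then c1 * c2 else 0)"
        unfolding x_def y_def using ij by (simp add: elem_sub)
      then show ?thesis by (simp add: matrix_matrix_mult_def)
    qed
    have t2: "((y - mat 1) ** (x - mat 1)) $ i0 $ i0 = 0"
    proof -
      have "\<And>k. (y - mat 1) $ i0 $ k * (x - mat 1) $ k $ i0 = 0"
        unfolding x_def y_def using ij by (simp add: elem_sub)
      then show ?thesis by (simp add: matrix_matrix_mult_def)
    qed
    have "(x ** y - y ** x) $ i0 $ i0 = c1 * c2"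
      by (subst commut) (simp only: vector_minus_component t1 t2 diff_zero)
    then have e0: "c1 * c2 = of_nat (p ^ (r + s)) * c" using c by (rule subst)
    have ex: "a + r + (r + s - (a + r)) = r + s" using rl assms(7) unfolding a_def by simp
    have "(of_nat (p ^ (a + r)) :: 'a) = c1 * c2" unfolding c1_def c2_def power_add of_nat_mult ..
    then have e: "(of_nat (p ^ (a + r)) :: 'a) = of_nat (p ^ (a + r + (r + s - (a + r)))) * c"
      unfolding ex using e0 by simp
    have "r + s - (a + r) \<ge> 1" using rl assms(7) unfolding a_def by simp
    then show False using free_pow[OF assms(1) assms(3) _ e] by blast
  qed
  show "central_ext (cong_subgroup (p ^ r) :: ('a^'n^'n) set)
            (cong_subgroup (p ^ (r + s - l))) ?K" if rl: "r \<ge> l"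
    unfolding central_ext_def
  proof (intro ballI)
    fix x y :: "'a^'n^'n"
    assume xN: "x \<in> cong_subgroup (p ^ (r + s - l))" and yG: "y \<in> cong_subgroup (p ^ r)"
    define M where "M = y ** x"
    have dM: "det M = 1" using xN yG unfolding M_def cong_iff by (simp add: det_mul)
    define k0 where "k0 = adjm M ** (x ** y)"
    have xy: "x ** y = M ** k0"
      unfolding k0_def using inv_both(1)[OF dM] by (metis matrix_mul_assoc matrix_mul_lid)
    have dk: "det k0 = 1" unfolding k0_def using inv_both(3)[OF dM] xN yG
      unfolding cong_iff by (simp add: det_mul)
    have km: "k0 - mat 1 = adjm M ** (x ** y - y ** x)"
      unfolding k0_def mdiff_l using inv_both(2)[OF dM] by (simp add: M_def)
    have U: "dvq (p ^ a) (x - mat 1)" using xN unfolding cong_iff a_def by blast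
    have V: "dvq (p ^ r) (y - mat 1)" using yG unfolding cong_iff by blast
    have dv: "p ^ (r + s) dvd p ^ a * p ^ r"
      unfolding power_add[symmetric] using rl assms(7) unfolding a_def by (intro le_imp_power_dvd) simp
    have "dvq (p ^ (r + s)) (x ** y - y ** x)"
      apply (subst commut)
      by (intro dvq_diff dvq_dvd[OF dv] dvq_mult2[OF U V]
            dvq_dvd[OF dv[unfolded mult.commute[of "p ^ a"]]] dvq_mult2[OF V U])
    then have "dvq (p ^ (r + s)) (k0 - mat 1)" unfolding km by (rule dvq_mult_l)
    then have "k0 \<in> ?K" using dk cong_iff by blast
    then show "lcoset (x ** y) ?K = lcoset (y ** x) ?K"
      unfolding xy M_def[symmetric] by (rule lcoset_shift)
  qed
qed

end
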